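(* Let $\mathcal H_3=\mathbb{R}^3$ with coordinates $(x,y,z)$ and metric $g=dx^2+dy^2+(dz-x\,dy)^2$ (the Heisenberg group), and let $\pi:\mathcal H_3\to\mathbb{R}^2$, $\pi(x,y,z)=(x,y)$ (a Riemannian submersion onto the Euclidean plane with minimal fibres). Let $\gamma:I\to\mathbb{R}^2$ be a curve parametrised by arc length with signed curvature $k$. Then the cylinder $S=\pi^{-1}(\gamma(I))\subset\mathcal H_3$ is a biminimal surface with respect to $\lambda$ if and only if $\gamma$ is a biminimal curve with respect to $\lambda+1$ in $\mathbb{R}^2$, i.e. $k''=k^3+(1+\lambda)k$.
   Context: For a map $\phi$: tension field $\tau(\phi)=\operatorname{trace}\nabla d\phi$, bitension field $\tau_2(\phi)=\sum_i(\nabla^\phi_{e_i}\nabla^\phi_{e_i}-\nabla^\phi_{\nabla_{e_i}e_i})\tau(\phi)+\sum_iR^N(d\phi(e_i),\tau(\phi))d\phi(e_i)$, with $R(X,Y)Z=\nabla_{[X,Y]}Z-\nabla_X\nabla_YZ+\nabla_Y\nabla_XZ$. An immersion is biminimal with respect to $\lambda\in\mathbb{R}$ if $[\tau_2(\phi)]^\perp-\lambda[\tau(\phi)]^\perp=0$ ($\perp$ = normal component). For an arc-length plane curve with signed curvature $k$, biminimality with respect to $\mu$ means $k''-k^3-\mu k=0$. *)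

theory Defs
  imports "HOL-Analysis.Analysis"
begin

definition pd :: "(real^'n \<Rightarrow> real) \<Rightarrow> 'n::finite \<Rightarrow> real^'n \<Rightarrow> real" where
  "pd f i p = deriv (\<lambda>h. f (p + h *\<^sub>R axis i 1)) 0"

definition minv :: "('n::finite \<Rightarrow> 'n \<Rightarrow> real) \<Rightarrow> 'n \<Rightarrow> 'n \<Rightarrow> real" where
  "minv A i j = matrix_inv (\<chi> a b. A a b) $ i $ j"

text \<open>A metric is given by its coefficients G p i j. Christoffel symbols Gamma^k_ij.\<close>
definition christoffel ::
  "(real^'n \<Rightarrow> 'n \<Rightarrow> 'n \<Rightarrow> real) \<Rightarrow> real^'n \<Rightarrow> 'n::finite \<Rightarrow> 'n \<Rightarrow> 'n \<Rightarrow> real" where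
  "christoffel G p k i j = (1/2) * (\<Sum>l\<in>UNIV. minv (G p) k l *
      (pd (\<lambda>q. G q j l) i p + pd (\<lambda>q. G q i l) j p - pd (\<lambda>q. G q i j) l p))"

text \<open>Curvature components with the paper's sign convention
  R(X,Y)Z = nabla_[X,Y] Z - nabla_X nabla_Y Z + nabla_Y nabla_X Z;
  curv G p l i j k is the l-th component of R(d_i,d_j)d_k.\<close>
definition curv ::
  "(real^'n \<Rightarrow> 'n \<Rightarrow> 'n \<Rightarrow> real) \<Rightarrow> real^'n \<Rightarrow> 'n::finite \<Rightarrow> 'n \<Rightarrow> 'n \<Rightarrow> 'n \<Rightarrow> real" where
  "curv G p l i j k = - (pd (\<lambda>q. christoffel G q l j k) i p - pd (\<lambda>q. christoffel G q l i k) j p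
      + (\<Sum>m\<in>UNIV. christoffel G p l i m * christoffel G p m j k
                   - christoffel G p l j m * christoffel G p m i k))"

definition riem ::
  "(real^'n \<Rightarrow> 'n \<Rightarrow> 'n \<Rightarrow> real) \<Rightarrow> real^'n \<Rightarrow> real^'n \<Rightarrow> real^'n \<Rightarrow> real^'n \<Rightarrow> real^'n::finite" where
  "riem G p X Y Z = (\<chi> l. \<Sum>i\<in>UNIV. \<Sum>j\<in>UNIV. \<Sum>k\<in>UNIV. X$i * Y$j * Z$k * curv G p l i j k)"

definition ginner :: "(real^'n \<Rightarrow> 'n \<Rightarrow> 'n \<Rightarrow> real) \<Rightarrow> real^'n \<Rightarrow> real^'n \<Rightarrow> real^'n::finite \<Rightarrow> real" where
  "ginner G p v w = (\<Sum>i\<in>UNIV. \<Sum>j\<in>UNIV. G p i j * v$i * w$j)"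

definition dphi :: "(real^'m \<Rightarrow> real^'n) \<Rightarrow> 'm::finite \<Rightarrow> real^'m \<Rightarrow> real^'n::finite" where
  "dphi \<phi> a p = (\<chi> k. pd (\<lambda>q. \<phi> q $ k) a p)"

definition indmetric ::
  "(real^'n \<Rightarrow> 'n \<Rightarrow> 'n \<Rightarrow> real) \<Rightarrow> (real^'m \<Rightarrow> real^'n::finite) \<Rightarrow> real^'m \<Rightarrow> 'm::finite \<Rightarrow> 'm \<Rightarrow> real" where
  "indmetric G \<phi> p a b = ginner G (\<phi> p) (dphi \<phi> a p) (dphi \<phi> b p)"

definition covd ::
  "(real^'n \<Rightarrow> 'n \<Rightarrow> 'n \<Rightarrow> real) \<Rightarrow> (real^'m \<Rightarrow> real^'n) \<Rightarrow> (real^'m \<Rightarrow> real^'n)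
     \<Rightarrow> 'm::finite \<Rightarrow> real^'m \<Rightarrow> real^'n::finite" where
  "covd G \<phi> V a p = (\<chi> k. pd (\<lambda>q. V q $ k) a p
      + (\<Sum>i\<in>UNIV. \<Sum>j\<in>UNIV. christoffel G (\<phi> p) k i j * (dphi \<phi> a p)$i * V p $ j))"

text \<open>Tension field tau(phi) = trace nabla d phi (trace w.r.t. the induced metric).\<close>
definition tension ::
  "(real^'n \<Rightarrow> 'n \<Rightarrow> 'n \<Rightarrow> real) \<Rightarrow> (real^'m \<Rightarrow> real^'n) \<Rightarrow> real^'m::finite \<Rightarrow> real^'n::finite" where
  "tension G \<phi> p = (\<Sum>a\<in>UNIV. \<Sum>b\<in>UNIV. minv (indmetric G \<phi> p) a b *\<^sub>R
      (covd G \<phi> (dphi \<phi> b) a p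
       - (\<Sum>c\<in>UNIV. christoffel (indmetric G \<phi>) p c a b *\<^sub>R dphi \<phi> c p)))"

definition roughlap ::
  "(real^'n \<Rightarrow> 'n \<Rightarrow> 'n \<Rightarrow> real) \<Rightarrow> (real^'m \<Rightarrow> real^'n) \<Rightarrow> (real^'m \<Rightarrow> real^'n)
     \<Rightarrow> real^'m::finite \<Rightarrow> real^'n::finite" where
  "roughlap G \<phi> V p = (\<Sum>a\<in>UNIV. \<Sum>b\<in>UNIV. minv (indmetric G \<phi> p) a b *\<^sub>R
      (covd G \<phi> (covd G \<phi> V b) a p
       - (\<Sum>c\<in>UNIV. christoffel (indmetric G \<phi>) p c a b *\<^sub>R covd G \<phi> V c p)))"

text \<open>Bitension field tau_2(phi) = trace(nabla nabla - nabla_nabla) tau + trace R^N(d phi, tau) d phi.\<close>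
definition bitension ::
  "(real^'n \<Rightarrow> 'n \<Rightarrow> 'n \<Rightarrow> real) \<Rightarrow> (real^'m \<Rightarrow> real^'n) \<Rightarrow> real^'m::finite \<Rightarrow> real^'n::finite" where
  "bitension G \<phi> p = roughlap G \<phi> (tension G \<phi>) p
     + (\<Sum>a\<in>UNIV. \<Sum>b\<in>UNIV. minv (indmetric G \<phi> p) a b *\<^sub>R
          riem G (\<phi> p) (dphi \<phi> a p) (tension G \<phi> p) (dphi \<phi> b p))"

definition normalpart ::
  "(real^'n \<Rightarrow> 'n \<Rightarrow> 'n \<Rightarrow> real) \<Rightarrow> (real^'m \<Rightarrow> real^'n) \<Rightarrow> real^'m::finite \<Rightarrow> real^'n \<Rightarrow> real^'n::finite" where
  "normalpart G \<phi> p V = V - (\<Sum>a\<in>UNIV. \<Sum>b\<in>UNIV. (minv (indmetric G \<phi> p) a b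
       * ginner G (\<phi> p) V (dphi \<phi> a p)) *\<^sub>R dphi \<phi> b p)"

definition biminimal_immersion ::
  "(real^'n \<Rightarrow> 'n \<Rightarrow> 'n \<Rightarrow> real) \<Rightarrow> (real^'m \<Rightarrow> real^'n) \<Rightarrow> (real^'m::finite) set \<Rightarrow> real \<Rightarrow> bool" where
  "biminimal_immersion G \<phi> U lam \<longleftrightarrow>
     (\<forall>p\<in>U. normalpart G \<phi> p (bitension G \<phi> p) - lam *\<^sub>R normalpart G \<phi> p (tension G \<phi> p) = (0::real^'n::finite))"

text \<open>g = dx^2 + dy^2 + (dz - x dy)^2, coordinates (x,y,z) = (p$1,p$2,p$3).\<close>
definition heis_metric :: "real^3 \<Rightarrow> 3 \<Rightarrow> 3 \<Rightarrow> real" where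
  "heis_metric p i j =
     (if i = 1 \<and> j = 1 then 1
      else if i = 2 \<and> j = 2 then 1 + (p$1)^2
      else if (i = 2 \<and> j = 3) \<or> (i = 3 \<and> j = 2) then - (p$1)
      else if i = 3 \<and> j = 3 then 1
      else 0)"

definition hproj :: "real^3 \<Rightarrow> real^2" where
  "hproj p = vector [p$1, p$2]"

text \<open>Parametrisation (s,t) |-> (gamma_1 s, gamma_2 s, t) of the cylinder pi^{-1}(gamma(I)).\<close>
definition cylinder :: "(real \<Rightarrow> real^2) \<Rightarrow> real^2 \<Rightarrow> real^3" where
  "cylinder \<gamma> q = vector [\<gamma> (q$1) $ 1, \<gamma> (q$1) $ 2, q$2]"

definition signed_curvature :: "(real \<Rightarrow> real^2) \<Rightarrow> real \<Rightarrow> real" where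
  "signed_curvature \<gamma> s =
     deriv (\<lambda>t. \<gamma> t $ 1) s * deriv (deriv (\<lambda>t. \<gamma> t $ 2)) s
   - deriv (\<lambda>t. \<gamma> t $ 2) s * deriv (deriv (\<lambda>t. \<gamma> t $ 1)) s"

definition biminimal_curve :: "(real \<Rightarrow> real^2) \<Rightarrow> real set \<Rightarrow> real \<Rightarrow> bool" where
  "biminimal_curve \<gamma> I \<mu> \<longleftrightarrow>
     (\<forall>s\<in>I. deriv (deriv (signed_curvature \<gamma>)) s
              - (signed_curvature \<gamma> s)^3 - \<mu> * signed_curvature \<gamma> s = 0)"

end

theory Submission
  imports Defs
begin


lemma cases3: fixes i :: 3 obtains "i = 1" | "i = 2" | "i = 3"
  using exhaust_3 by blast

lemma cases2: fixes i :: 2 obtains "i = 1" | "i = 2"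
  using exhaust_2 by blast

lemma idx3: fixes i :: 3 shows "P 1 \<Longrightarrow> P 2 \<Longrightarrow> P 3 \<Longrightarrow> P i"
  using exhaust_3 by metis

lemma idx2: fixes i :: 2 shows "P 1 \<Longrightarrow> P 2 \<Longrightarrow> P i"
  using exhaust_2 by metis

lemma pd_local:
  fixes f :: "real^'n::finite \<Rightarrow> real"
  assumes "open I" "p$m \<in> I" "\<And>q. q$m \<in> I \<Longrightarrow> f q = F (q$m)"
    and "(F has_real_derivative F') (at (p$m))"
  shows "pd f l p = (if l = m then F' else 0)"
proof -
  define d where "d = (if l = m then 1 else (0::real))"
  have ax: "\<And>h. (p + h *\<^sub>R axis l 1)$m = p$m + h * d"
    by (simp add: d_def axis_def)
  have g: "((\<lambda>h. F (p$m + h * d)) has_real_derivative F' * d) (at 0)"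
    using assms(4) by (auto intro!: derivative_eq_intros DERIV_chain2[where f=F])
  define T where "T = {h. p$m + h * d \<in> I}"
  have oT: "open T" unfolding T_def
    using open_vimage[OF assms(1), of "\<lambda>h. p$m + h * d"]
    by (simp add: vimage_def continuous_on_add continuous_on_mult_right continuous_on_id)
  have "0 \<in> T" using assms(2) by (simp add: T_def)
  have "((\<lambda>h. f (p + h *\<^sub>R axis l 1)) has_real_derivative F' * d) (at 0)"
    by (rule has_field_derivative_transform_within_open[OF g oT \<open>0\<in>T\<close>])
       (metis (mono_tags) T_def ax assms(3) mem_Collect_eq)
  then show ?thesis unfolding pd_def by (simp add: DERIV_imp_deriv d_def)
qed

lemma pd_global:
  fixes F :: "real \<Rightarrow> real"
  assumes "(F has_real_derivative F') (at (p$m))"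
  shows "pd (\<lambda>q::real^'n::finite. F (q$m)) l p = (if l = m then F' else 0)"
  by (rule pd_local[of UNIV]) (use assms in auto)



lemma minv_eqI:
  fixes B :: "real^'n::finite^'n"
  assumes "(\<chi> a b. A a b) ** B = mat 1" "B ** (\<chi> a b. A a b) = mat 1"
  shows "minv A i j = B $ i $ j"
proof -
  let ?M = "(\<chi> a b. A a b) :: real^'n^'n"
  let ?B' = "SOME B'::real^'n^'n. ?M ** B' = mat 1 \<and> B' ** ?M = mat 1"
  have "?M ** ?B' = mat 1 \<and> ?B' ** ?M = mat 1"
    by (rule someI[of _ B]) (use assms in auto)
  then have "?B' = B"
  proof -
    assume h: "?M ** ?B' = mat 1 \<and> ?B' ** ?M = mat 1"
    have "?B' = ?B' ** (?M ** B)" using assms(1) by (simp add: matrix_mul_rid)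
    also have "\<dots> = (?B' ** ?M) ** B" by (simp add: matrix_mul_assoc)
    also have "\<dots> = B" using h by (simp add: matrix_mul_lid)
    finally show ?thesis .
  qed
  then show ?thesis unfolding minv_def matrix_inv_def by simp
qed

definition hm :: "real \<Rightarrow> 3 \<Rightarrow> 3 \<Rightarrow> real" where
  "hm a i j =
     (if i = 1 \<and> j = 1 then 1
      else if i = 2 \<and> j = 2 then 1 + a^2
      else if (i = 2 \<and> j = 3) \<or> (i = 3 \<and> j = 2) then - a
      else if i = 3 \<and> j = 3 then 1
      else 0)"

definition dhm :: "real \<Rightarrow> 3 \<Rightarrow> 3 \<Rightarrow> real" where
  "dhm a i j =
     (if i = 2 \<and> j = 2 then 2 * a
      else if (i = 2 \<and> j = 3) \<or> (i = 3 \<and> j = 2) then - 1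
      else 0)"

lemma heis_hm: "heis_metric p i j = hm (p$1) i j"
  unfolding heis_metric_def hm_def by simp

lemma hm_deriv: "((\<lambda>a. hm a i j) has_real_derivative dhm a i j) (at a)"
  by (cases i rule: cases3; cases j rule: cases3)
     (simp_all add: hm_def dhm_def, (rule derivative_eq_intros | simp)+)

lemma pd_heis: "pd (\<lambda>q. heis_metric q i j) l p = (if l = 1 then dhm (p$1) i j else 0)"
  unfolding heis_hm by (rule pd_global[OF hm_deriv])

definition hinv :: "real \<Rightarrow> 3 \<Rightarrow> 3 \<Rightarrow> real" where
  "hinv a i j =
     (if i = 1 \<and> j = 1 then 1
      else if i = 2 \<and> j = 2 then 1
      else if (i = 2 \<and> j = 3) \<or> (i = 3 \<and> j = 2) then a
      else if i = 3 \<and> j = 3 then 1 + a^2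
      else 0)"

lemma minv_heis: "minv (heis_metric p) i j = hinv (p$1) i j"
proof -
  have "minv (heis_metric p) i j = (\<chi> i j. hinv (p$1) i j) $ i $ j"
    by (rule minv_eqI) (simp_all add: matrix_matrix_mult_def vec_eq_iff forall_3 sum_3 mat_def heis_metric_def hinv_def power2_eq_square field_simps)
  then show ?thesis by simp
qed

definition half :: real where "half = 1/2"

lemma two_half: "2 * half = 1" by (simp add: half_def)

definition chr :: "real \<Rightarrow> 3 \<Rightarrow> 3 \<Rightarrow> 3 \<Rightarrow> real" where
  "chr a k i j =
    (if k = 1 then (if i = 2 \<and> j = 2 then - a else if (i = 2 \<and> j = 3) \<or> (i = 3 \<and> j = 2) then half else 0)
     else if k = 2 then (if (i = 1 \<and> j = 2) \<or> (i = 2 \<and> j = 1) then a * half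
                         else if (i = 1 \<and> j = 3) \<or> (i = 3 \<and> j = 1) then - half else 0)
     else (if (i = 1 \<and> j = 2) \<or> (i = 2 \<and> j = 1) then a^2 * half - half
           else if (i = 1 \<and> j = 3) \<or> (i = 3 \<and> j = 1) then - (a * half) else 0))"

definition dchr :: "real \<Rightarrow> 3 \<Rightarrow> 3 \<Rightarrow> 3 \<Rightarrow> real" where
  "dchr a k i j =
    (if k = 1 then (if i = 2 \<and> j = 2 then - 1 else 0)
     else if k = 2 then (if (i = 1 \<and> j = 2) \<or> (i = 2 \<and> j = 1) then half else 0)
     else (if (i = 1 \<and> j = 2) \<or> (i = 2 \<and> j = 1) then a
           else if (i = 1 \<and> j = 3) \<or> (i = 3 \<and> j = 1) then - half else 0))"

lemma chr_heis: "christoffel heis_metric p k i j = chr (p$1) k i j"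
  unfolding christoffel_def pd_heis minv_heis
  by (cases k rule: cases3; cases i rule: cases3; cases j rule: cases3)
     (simp_all add: sum_3 hinv_def dhm_def chr_def half_def algebra_simps power2_eq_square)

lemma chr_deriv: "((\<lambda>a. chr a k i j) has_real_derivative dchr a k i j) (at a)"
  by (cases k rule: cases3; cases i rule: cases3; cases j rule: cases3;
      simp add: chr_def dchr_def; auto intro!: derivative_eq_intros simp: half_def)

lemma pd_chr: "pd (\<lambda>q. christoffel heis_metric q k i j) l p = (if l = 1 then dchr (p$1) k i j else 0)"
  unfolding chr_heis by (rule pd_global[OF chr_deriv])

lemma curv_heis: "curv heis_metric p l i j k =
   - ((if i = 1 then dchr (p$1) l j k else 0) - (if j = 1 then dchr (p$1) l i k else 0)
      + (\<Sum>m\<in>UNIV. chr (p$1) l i m * chr (p$1) m j k - chr (p$1) l j m * chr (p$1) m i k))"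
  unfolding curv_def pd_chr by (simp add: chr_heis)



locale cyl =
  fixes \<gamma> :: "real \<Rightarrow> real^2" and I :: "real set"
  assumes I_open: "open I"
    and smooth: "\<And>i n s. s \<in> I \<Longrightarrow>
        ((deriv ^^ n) (\<lambda>t. \<gamma> t $ i) has_real_derivative (deriv ^^ Suc n) (\<lambda>t. \<gamma> t $ i) s) (at s)"
    and arcl: "\<And>s. s \<in> I \<Longrightarrow> (deriv (\<lambda>t. \<gamma> t $ 1) s)^2 + (deriv (\<lambda>t. \<gamma> t $ 2) s)^2 = 1"
begin

definition "X s = \<gamma> s $ 1"
definition "Y s = \<gamma> s $ 2"
definition "C = deriv (\<lambda>t. \<gamma> t $ 1)"
definition "S = deriv (\<lambda>t. \<gamma> t $ 2)"
definition "K = signed_curvature \<gamma>"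
definition "K1 = deriv K"
definition "K2 = deriv K1"

lemma G0: "(deriv ^^ 0) f = f" by simp
lemma GS: "(deriv ^^ Suc n) f = deriv ((deriv ^^ n) f)" by simp

lemma arc: "s \<in> I \<Longrightarrow> (C s)^2 + (S s)^2 = 1"
  using arcl by (simp add: C_def S_def)

lemma dX: "s \<in> I \<Longrightarrow> (X has_real_derivative C s) (at s)"
  using smooth[of s 0 1] by (simp add: X_def[abs_def] C_def)

lemma dY: "s \<in> I \<Longrightarrow> (Y has_real_derivative S s) (at s)"
  using smooth[of s 0 2] by (simp add: Y_def[abs_def] S_def)

lemma dC0: "s \<in> I \<Longrightarrow> (C has_real_derivative deriv C s) (at s)"
  using smooth[of s 1 1] by (simp add: C_def)

lemma dS0: "s \<in> I \<Longrightarrow> (S has_real_derivative deriv S s) (at s)"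
  using smooth[of s 1 2] by (simp add: S_def)

lemma dC1: "s \<in> I \<Longrightarrow> (deriv C has_real_derivative deriv (deriv C) s) (at s)"
  using smooth[of s 2 1] by (simp add: C_def numeral_2_eq_2)

lemma dS1: "s \<in> I \<Longrightarrow> (deriv S has_real_derivative deriv (deriv S) s) (at s)"
  using smooth[of s 2 2] by (simp add: S_def numeral_2_eq_2)

lemma dC2: "s \<in> I \<Longrightarrow> (deriv (deriv C) has_real_derivative deriv (deriv (deriv C)) s) (at s)"
  using smooth[of s 3 1] by (simp add: C_def numeral_3_eq_3)

lemma dS2: "s \<in> I \<Longrightarrow> (deriv (deriv S) has_real_derivative deriv (deriv (deriv S)) s) (at s)"
  using smooth[of s 3 2] by (simp add: S_def numeral_3_eq_3)

lemma K_eq: "K = (\<lambda>s. C s * deriv S s - S s * deriv C s)"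
  by (simp add: K_def signed_curvature_def[abs_def] C_def S_def)

lemma orth: assumes "s \<in> I" shows "C s * deriv C s + S s * deriv S s = 0"
proof -
  have d1: "((\<lambda>s. (C s)^2 + (S s)^2) has_real_derivative 2 * C s * deriv C s + 2 * S s * deriv S s) (at s)"
    using assms by (auto intro!: derivative_eq_intros dC0 dS0)
  have "((\<lambda>s::real. 1::real) has_real_derivative 0) (at s)" by simp
  then have d2: "((\<lambda>s. (C s)^2 + (S s)^2) has_real_derivative 0) (at s)"
    by (rule has_field_derivative_transform_within_open[OF _ I_open assms]) (simp add: arc)
  from DERIV_unique[OF d1 d2] show ?thesis by simp
qed

lemma dC: assumes "s \<in> I" shows "(C has_real_derivative - (S s * K s)) (at s)"
proof -
  have "deriv C s = - (S s * K s)"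
    using orth[OF assms] arc[OF assms] unfolding K_eq by algebra
  then show ?thesis using dC0[OF assms] by simp
qed

lemma dS: assumes "s \<in> I" shows "(S has_real_derivative C s * K s) (at s)"
proof -
  have "deriv S s = C s * K s"
    using orth[OF assms] arc[OF assms] unfolding K_eq by algebra
  then show ?thesis using dS0[OF assms] by simp
qed

lemma dK0: assumes "s \<in> I"
  shows "(K has_real_derivative C s * deriv (deriv S) s - S s * deriv (deriv C) s) (at s)"
  unfolding K_eq using assms
  by (auto intro!: derivative_eq_intros dC0 dS0 dC1 dS1 simp: algebra_simps)

lemma K1_eq: "s \<in> I \<Longrightarrow> K1 s = C s * deriv (deriv S) s - S s * deriv (deriv C) s"
  unfolding K1_def by (rule DERIV_imp_deriv[OF dK0])

lemma dK: "s \<in> I \<Longrightarrow> (K has_real_derivative K1 s) (at s)"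
  using dK0 K1_eq by simp

lemma dK1: assumes "s \<in> I" shows "(K1 has_real_derivative K2 s) (at s)"
proof -
  have "((\<lambda>s. C s * deriv (deriv S) s - S s * deriv (deriv C) s) has_real_derivative
     deriv C s * deriv (deriv S) s + C s * deriv (deriv (deriv S)) s
     - (deriv S s * deriv (deriv C) s + S s * deriv (deriv (deriv C)) s)) (at s)"
    using assms by (auto intro!: derivative_eq_intros dC0 dS0 dC2 dS2 dC1 dS1)
  then have "(K1 has_real_derivative
     deriv C s * deriv (deriv S) s + C s * deriv (deriv (deriv S)) s
     - (deriv S s * deriv (deriv C) s + S s * deriv (deriv (deriv C)) s)) (at s)"
    by (rule has_field_derivative_transform_within_open[OF _ I_open assms]) (simp add: K1_eq)
  moreover then have "K2 s = deriv C s * deriv (deriv S) s + C s * deriv (deriv (deriv S)) s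
     - (deriv S s * deriv (deriv C) s + S s * deriv (deriv (deriv C)) s)"
    unfolding K2_def by (rule DERIV_imp_deriv)
  ultimately show ?thesis by simp
qed

lemma curve_K2: "deriv (deriv (signed_curvature \<gamma>)) s = K2 s"
  by (simp add: K2_def K1_def K_def)

end


context cyl begin

abbreviation "\<phi> \<equiv> cylinder \<gamma>"

lemma cyl1: "cylinder \<gamma> q $ 1 = X (q$1)" by (simp add: cylinder_def X_def)
lemma cyl2: "cylinder \<gamma> q $ 2 = Y (q$1)" by (simp add: cylinder_def Y_def)
lemma cyl3: "cylinder \<gamma> q $ 3 = q$2" by (simp add: cylinder_def)

definition dp :: "2 \<Rightarrow> real \<Rightarrow> real^3" where
  "dp a s = (if a = 1 then vector [C s, S s, 0] else vector [0, 0, 1])"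

lemma dphi_cyl: assumes "q$1 \<in> I" shows "dphi (cylinder \<gamma>) a q = dp a (q$1)"
proof -
  have 1: "\<And>a. pd (\<lambda>q. cylinder \<gamma> q $ 1) a q = (if a = 1 then C (q$1) else 0)"
    unfolding cyl1 by (rule pd_local[OF I_open assms]) (auto intro: dX assms)
  have 2: "\<And>a. pd (\<lambda>q. cylinder \<gamma> q $ 2) a q = (if a = 1 then S (q$1) else 0)"
    unfolding cyl2 by (rule pd_local[OF I_open assms]) (auto intro: dY assms)
  have 3: "\<And>a. pd (\<lambda>q. cylinder \<gamma> q $ 3) a q = (if a = 2 then 1 else 0)"
    unfolding cyl3 using pd_global[where F="\<lambda>x. x" and F'=1 and m=2 and p=q] by simp
  show ?thesis unfolding dphi_def dp_def
    by (cases a rule: cases2) (simp_all add: vec_eq_iff forall_3 1 2 3)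
qed

lemma covd_cf:
  assumes p: "p$1 \<in> I" and V: "\<And>q. q$1 \<in> I \<Longrightarrow> V q = v (q$1)"
    and dv: "\<And>k. ((\<lambda>s. v s $ k) has_real_derivative v' $ k) (at (p$1))"
  shows "covd heis_metric (cylinder \<gamma>) V a p = (\<chi> k. (if a = 1 then v' $ k else 0) +
     (\<Sum>i\<in>UNIV. \<Sum>j\<in>UNIV. chr (X (p$1)) k i j * dp a (p$1) $ i * v (p$1) $ j))"
proof -
  have "pd (\<lambda>q. V q $ k) a p = (if a = 1 then v' $ k else 0)" for k
    by (rule pd_local[OF I_open p]) (auto simp: V intro: dv)
  then show ?thesis unfolding covd_def
    by (simp add: chr_heis cyl1 dphi_cyl[OF p] V[OF p])
qed

definition hmat :: "real \<Rightarrow> 2 \<Rightarrow> 2 \<Rightarrow> real" where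
  "hmat s a b = (if a = 1 \<and> b = 1 then X s^2 * S s^2 + 1 else if a = 2 \<and> b = 2 then 1 else - X s * S s)"

definition dhmat :: "real \<Rightarrow> 2 \<Rightarrow> 2 \<Rightarrow> real" where
  "dhmat s a b = (if a = 1 \<and> b = 1 then 2 * X s^2 * C s * S s * K s + 2 * X s * C s * S s^2
     else if a = 2 \<and> b = 2 then 0 else - X s * C s * K s - C s * S s)"

definition hinv2 :: "real \<Rightarrow> 2 \<Rightarrow> 2 \<Rightarrow> real" where
  "hinv2 s a b = (if a = 1 \<and> b = 1 then 1 else if a = 2 \<and> b = 2 then X s^2 * S s^2 + 1 else X s * S s)"

lemma ind_cyl: assumes "q$1 \<in> I" shows "indmetric heis_metric (cylinder \<gamma>) q a b = hmat (q$1) a b"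
proof -
  have "(C (q$1))^2 + (S (q$1))^2 = 1" using arc assms by simp
  then show ?thesis
    unfolding indmetric_def ginner_def dphi_cyl[OF assms] heis_hm cyl1
    by (induct a rule: idx2; induct b rule: idx2;
        simp add: sum_3 dp_def hm_def hmat_def; algebra)
qed

lemma hmat_deriv: "s \<in> I \<Longrightarrow> ((\<lambda>s. hmat s a b) has_real_derivative dhmat s a b) (at s)"
  by (cases a rule: cases2; cases b rule: cases2; simp add: hmat_def dhmat_def;
      auto intro!: derivative_eq_intros dX dC dS simp: algebra_simps power2_eq_square)

lemma pd_ind: assumes "p$1 \<in> I"
  shows "pd (\<lambda>q. indmetric heis_metric (cylinder \<gamma>) q a b) l p = (if l = 1 then dhmat (p$1) a b else 0)"
  by (rule pd_local[OF I_open assms]) (auto simp: ind_cyl intro: hmat_deriv assms)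

lemma minv_ind: assumes "p$1 \<in> I"
  shows "minv (indmetric heis_metric (cylinder \<gamma>) p) a b = hinv2 (p$1) a b"
proof -
  have "minv (indmetric heis_metric (cylinder \<gamma>) p) a b = (\<chi> a b. hinv2 (p$1) a b) $ a $ b"
    by (rule minv_eqI)
       (simp_all add: ind_cyl[OF assms] matrix_matrix_mult_def vec_eq_iff forall_2 sum_2 mat_def hmat_def hinv2_def
             power2_eq_square field_simps)
  then show ?thesis by simp
qed

definition hc :: "real \<Rightarrow> 2 \<Rightarrow> 2 \<Rightarrow> 2 \<Rightarrow> real" where
  "hc s c a b = (if c = 2 \<and> a = 1 \<and> b = 1 then - X s * C s * K s - C s * S s else 0)"

lemma chr_ind: assumes "p$1 \<in> I"
  shows "christoffel (indmetric heis_metric (cylinder \<gamma>)) p c a b = hc (p$1) c a b"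
  unfolding christoffel_def pd_ind[OF assms] minv_ind[OF assms]
  by (induct c rule: idx2; induct a rule: idx2; induct b rule: idx2;
      simp add: sum_2 hinv2_def dhmat_def hc_def; algebra)

end


context cyl begin

definition dpd :: "2 \<Rightarrow> real \<Rightarrow> real^3" where
  "dpd b s = (if b = 1 then vector [- (S s * K s), C s * K s, 0] else vector [0, 0, 0])"

lemma dp_deriv: "s \<in> I \<Longrightarrow> ((\<lambda>s. dp b s $ k) has_real_derivative dpd b s $ k) (at s)"
  by (induct b rule: idx2; induct k rule: idx3; simp add: dp_def dpd_def;
      auto intro!: derivative_eq_intros dC dS)

lemma covd_dphi: assumes "p$1 \<in> I"
  shows "covd heis_metric (cylinder \<gamma>) (dphi (cylinder \<gamma>) b) a p = (\<chi> k. (if a = 1 then dpd b (p$1) $ k else 0) +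
     (\<Sum>i\<in>UNIV. \<Sum>j\<in>UNIV. chr (X (p$1)) k i j * dp a (p$1) $ i * dp b (p$1) $ j))"
  by (rule covd_cf[OF assms]) (auto simp: dphi_cyl intro: dp_deriv assms)

definition tau :: "real \<Rightarrow> real^3" where
  "tau s = vector [- (S s * K s), C s * K s, X s * C s * K s]"

lemma tension_cyl: assumes "p$1 \<in> I" shows "tension heis_metric (cylinder \<gamma>) p = tau (p$1)"
proof -
  obtain s where s: "p$1 = s" "s \<in> I" using assms by blast
  have a: "(C s)^2 + (S s)^2 = 1" using arc s by simp
  show ?thesis
    unfolding tension_def covd_dphi[OF assms] minv_ind[OF assms] chr_ind[OF assms] dphi_cyl[OF assms]
    unfolding vec_eq_iff s(1)
    apply (rule allI)
    subgoal for k
      using a two_half by (induct k rule: idx3; simp add: sum_2 sum_3 chr_def dp_def dpd_def hinv2_def hc_def tau_def; algebra)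
    done
qed

end


lemma pfix: "real 2 = 2" "real 3 = 3" "(x::real) ^ (2 - Suc 0) = x" "(x::real) ^ (3 - Suc 0) = x^2"
  by simp_all

lemma derivI: "(f has_real_derivative D1) (at s) \<Longrightarrow> D1 = D2 \<Longrightarrow> (f has_real_derivative D2) (at s)"
  by simp

context cyl begin

definition taud :: "real \<Rightarrow> real^3" where
  "taud s = vector [(- (C s * K s^2) - S s * K1 s), (C s * K1 s - S s * K s^2), (X s * C s * K1 s - X s * S s * K s^2 - S s^2 * K s + K s)]"

lemma tau_deriv: assumes s: "s \<in> I"
  shows "((\<lambda>s. tau s $ k) has_real_derivative taud s $ k) (at s)"
proof -
  have a: "(C s)^2 + (S s)^2 = 1" using arc s by simp
  show ?thesis
    apply (induct k rule: idx3)
    apply (simp add: tau_def taud_def, rule derivI, (auto intro!: derivative_eq_intros dX dC dS dK s)[1], (algebra | ((insert a two_half)[1], algebra)))+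
    done
qed

lemma covd_tau: assumes "p$1 = s" "s \<in> I"
  shows "covd heis_metric (cylinder \<gamma>) (tension heis_metric (cylinder \<gamma>)) a p = (\<chi> k. (if a = 1 then taud s $ k else 0) +
     (\<Sum>i\<in>UNIV. \<Sum>j\<in>UNIV. chr (X s) k i j * dp a s $ i * tau s $ j))"
  using covd_cf[of p "tension heis_metric (cylinder \<gamma>)" tau "taud s" a] assms
  by (auto simp: tension_cyl intro: tau_deriv)

definition cvf :: "2 \<Rightarrow> real \<Rightarrow> real^3" where
  "cvf b s = (if b = 1 then vector [(- (half * X s * C s * S s * K s) - C s * K s^2 - S s * K1 s), (- (half * X s * S s^2 * K s) + C s * K1 s - S s * K s^2), (- (half * X s^2 * S s^2 * K s) + X s * C s * K1 s - X s * S s * K s^2 + half * K s)]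
     else vector [(half * C s * K s), (half * S s * K s), (half * X s * S s * K s)])"

definition cvfd :: "2 \<Rightarrow> real \<Rightarrow> real^3" where
  "cvfd b s = (if b = 1 then vector [(- (half * X s * C s * S s * K1 s) + X s * S s^2 * K s^2 - half * X s * K s^2 - 3 * C s * K s * K1 s + half * S s^3 * K s + S s * K s^3 - half * S s * K s - S s * K2 s), (- (X s * C s * S s * K s^2) - half * X s * S s^2 * K1 s - half * C s * S s^2 * K s - C s * K s^3 + C s * K2 s - 3 * S s * K s * K1 s), (- (X s^2 * C s * S s * K s^2) - half * X s^2 * S s^2 * K1 s - X s * C s * S s^2 * K s - X s * C s * K s^3 + X s * C s * K2 s - 3 * X s * S s * K s * K1 s - C s * S s * K s^2 - S s^2 * K1 s + 3 * half * K1 s)]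
     else vector [(half * C s * K1 s - half * S s * K s^2), (half * C s * K s^2 + half * S s * K1 s), (half * X s * C s * K s^2 + half * X s * S s * K1 s + half * C s * S s * K s)])"

lemma cv_cyl: assumes p: "p$1 \<in> I"
  shows "covd heis_metric (cylinder \<gamma>) (tension heis_metric (cylinder \<gamma>)) b p = cvf b (p$1)"
proof -
  obtain s where s: "p$1 = s" "s \<in> I" using assms by blast
  have a: "(C s)^2 + (S s)^2 = 1" using arc s by simp
  show ?thesis
    unfolding covd_tau[OF s] vec_eq_iff s(1)
    apply (rule allI)
    subgoal for k
      by (induct b rule: idx2; induct k rule: idx3;
          simp add: sum_3 chr_def dp_def tau_def taud_def cvf_def; (algebra | ((insert a two_half)[1], algebra)))
    done
qed

lemma cvf_deriv: assumes s: "s \<in> I"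
  shows "((\<lambda>s. cvf b s $ k) has_real_derivative cvfd b s $ k) (at s)"
proof -
  have a: "(C s)^2 + (S s)^2 = 1" using arc s by simp
  show ?thesis
    apply (induct b rule: idx2; induct k rule: idx3)
    apply (simp add: cvf_def cvfd_def, rule derivI, (auto intro!: derivative_eq_intros dX dC dS dK dK1 s)[1], (simp only: pfix)?, (algebra | ((insert a two_half)[1], algebra)))+
    done
qed

lemma covd_cv: assumes "p$1 = s" "s \<in> I"
  shows "covd heis_metric (cylinder \<gamma>) (covd heis_metric (cylinder \<gamma>) (tension heis_metric (cylinder \<gamma>)) b) a p =
    (\<chi> k. (if a = 1 then cvfd b s $ k else 0) +
     (\<Sum>i\<in>UNIV. \<Sum>j\<in>UNIV. chr (X s) k i j * dp a s $ i * cvf b s $ j))"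
  using covd_cf[of p "covd heis_metric (cylinder \<gamma>) (tension heis_metric (cylinder \<gamma>)) b" "cvf b" "cvfd b s" a] assms
  by (auto simp: cv_cyl intro: cvf_deriv)

definition rlf :: "real \<Rightarrow> real^3" where
  "rlf s = vector [(- (3 * C s * K s * K1 s) + S s * K s^3 + half * S s * K s - S s * K2 s), (- (C s * K s^3) - half * C s * K s + C s * K2 s - 3 * S s * K s * K1 s), (- (X s * C s * K s^3) - half * X s * C s * K s + X s * C s * K2 s - 3 * X s * S s * K s * K1 s + K1 s)]"

lemma roughlap_cyl: assumes p: "p$1 \<in> I"
  shows "roughlap heis_metric (cylinder \<gamma>) (tension heis_metric (cylinder \<gamma>)) p = rlf (p$1)"
proof -
  obtain s where s: "p$1 = s" "s \<in> I" using assms by blast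
  have a: "(C s)^2 + (S s)^2 = 1" using arc s by simp
  show ?thesis
    unfolding roughlap_def covd_cv[OF s] cv_cyl[OF assms] minv_ind[OF assms] chr_ind[OF assms] vec_eq_iff s(1)
    apply (rule allI)
    subgoal for k
      by (induct k rule: idx3;
          simp add: sum_2 sum_3 chr_def dp_def cvf_def cvfd_def hinv2_def hc_def rlf_def; (algebra | ((insert a two_half)[1], algebra)))
    done
qed

end

context cyl begin

definition Rf :: "real \<Rightarrow> real^3" where
  "Rf s = vector [half * S s * K s, - (half * C s * K s), - (half * X s * C s * K s)]"

lemma riem_cyl: assumes p: "p$1 \<in> I"
  shows "(\<Sum>a\<in>UNIV. \<Sum>b\<in>UNIV. minv (indmetric heis_metric (cylinder \<gamma>) p) a b *\<^sub>R
          riem heis_metric (cylinder \<gamma> p) (dphi (cylinder \<gamma>) a p) (tension heis_metric (cylinder \<gamma>) p) (dphi (cylinder \<gamma>) b p))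
    = Rf (p$1)"
proof -
  obtain s where s: "p$1 = s" "s \<in> I" using assms by blast
  have a: "(C s)^2 + (S s)^2 = 1" using arc s by simp
  show ?thesis
    unfolding minv_ind[OF assms] dphi_cyl[OF assms] tension_cyl[OF assms] riem_def curv_heis cyl1 vec_eq_iff s(1)
    apply (rule allI)
    subgoal for k
      by (induct k rule: idx3;
          simp add: sum_2 sum_3 chr_def dchr_def dp_def tau_def hinv2_def Rf_def;
          (algebra | ((insert a two_half)[1], algebra)))
    done
qed

lemma bitension_cyl: assumes p: "p$1 \<in> I"
  shows "bitension heis_metric (cylinder \<gamma>) p = rlf (p$1) + Rf (p$1)"
  unfolding bitension_def roughlap_cyl[OF p] riem_cyl[OF p] ..

lemma main_cyl: assumes p: "p$1 \<in> I"
  shows "normalpart heis_metric (cylinder \<gamma>) p (bitension heis_metric (cylinder \<gamma>) p)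
          - lam *\<^sub>R normalpart heis_metric (cylinder \<gamma>) p (tension heis_metric (cylinder \<gamma>) p)
       = (K2 (p$1) - K (p$1)^3 - (lam + 1) * K (p$1)) *\<^sub>R vector [- S (p$1), C (p$1), X (p$1) * C (p$1)]"
proof -
  obtain s where s: "p$1 = s" "s \<in> I" using assms by blast
  have a: "(C s)^2 + (S s)^2 = 1" using arc s by simp
  show ?thesis
    unfolding normalpart_def bitension_cyl[OF p] tension_cyl[OF p] minv_ind[OF p] dphi_cyl[OF p]
      ginner_def heis_hm cyl1 vec_eq_iff s(1)
    apply (rule allI)
    subgoal for k
      by (induct k rule: idx3;
          simp add: sum_2 sum_3 hm_def dp_def hinv2_def rlf_def Rf_def tau_def;
          (algebra | ((insert a two_half)[1], algebra)))
    done
qed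

lemma final:
  "biminimal_immersion heis_metric (cylinder \<gamma>) {q. q$1 \<in> I} lam
         \<longleftrightarrow> biminimal_curve \<gamma> I (lam + 1)"
proof -
  have w: "vector [- S s, C s, X s * C s] \<noteq> (0::real^3)" if "s \<in> I" for s
  proof
    assume "vector [- S s, C s, X s * C s] = (0::real^3)"
    then have "S s = 0" "C s = 0" unfolding vec_eq_iff forall_3 by simp_all
    with arc[OF that] show False by simp
  qed
  have "biminimal_immersion heis_metric (cylinder \<gamma>) {q. q$1 \<in> I} lam \<longleftrightarrow>
        (\<forall>p::real^2. p$1 \<in> I \<longrightarrow> K2 (p$1) - K (p$1)^3 - (lam + 1) * K (p$1) = 0)"
  proof -
    have eq: "(normalpart heis_metric (cylinder \<gamma>) p (bitension heis_metric (cylinder \<gamma>) p)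
          - lam *\<^sub>R normalpart heis_metric (cylinder \<gamma>) p (tension heis_metric (cylinder \<gamma>) p) = 0)
        \<longleftrightarrow> K2 (p$1) - K (p$1)^3 - (lam + 1) * K (p$1) = 0" if "p$1 \<in> I" for p
      using main_cyl[OF that, of lam] w[OF that] by simp
    show ?thesis unfolding biminimal_immersion_def Ball_def mem_Collect_eq
    proof (intro iffI allI impI)
      fix p :: "real^2" assume h: "\<forall>x. x $ 1 \<in> I \<longrightarrow> normalpart heis_metric (cylinder \<gamma>) x (bitension heis_metric (cylinder \<gamma>) x)
          - lam *\<^sub>R normalpart heis_metric (cylinder \<gamma>) x (tension heis_metric (cylinder \<gamma>) x) = 0"
        and p: "p$1 \<in> I"
      show "K2 (p$1) - K (p$1)^3 - (lam + 1) * K (p$1) = 0" using eq[OF p] h p by blast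
    next
      fix p :: "real^2" assume h: "\<forall>p::real^2. p$1 \<in> I \<longrightarrow> K2 (p$1) - K (p$1)^3 - (lam + 1) * K (p$1) = 0"
        and p: "p$1 \<in> I"
      show "normalpart heis_metric (cylinder \<gamma>) p (bitension heis_metric (cylinder \<gamma>) p)
          - lam *\<^sub>R normalpart heis_metric (cylinder \<gamma>) p (tension heis_metric (cylinder \<gamma>) p) = 0"
        using eq[OF p] h p by blast
    qed
  qed
  also have "\<dots> \<longleftrightarrow> (\<forall>s\<in>I. K2 s - K s^3 - (lam + 1) * K s = 0)"
  proof
    assume h: "\<forall>p::real^2. p$1 \<in> I \<longrightarrow> K2 (p$1) - K (p$1)^3 - (lam + 1) * K (p$1) = 0"
    show "\<forall>s\<in>I. K2 s - K s^3 - (lam + 1) * K s = 0"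
    proof
      fix s assume "s \<in> I"
      then show "K2 s - K s^3 - (lam + 1) * K s = 0"
        using h[rule_format, of "vector [s, 0] :: real^2"] by simp
    qed
  qed auto
  also have "\<dots> \<longleftrightarrow> biminimal_curve \<gamma> I (lam + 1)"
    unfolding biminimal_curve_def K2_def K1_def K_def by simp
  finally show ?thesis .
qed

end
theorem proposition5p2:
  fixes \<gamma> :: "real \<Rightarrow> real^2" and I :: "real set" and lam :: real
  assumes I: "open I" "is_interval I" "I \<noteq> {}"
    and smooth: "\<And>i n s. s \<in> I \<Longrightarrow>
        ((deriv ^^ n) (\<lambda>t. \<gamma> t $ i) has_real_derivative (deriv ^^ Suc n) (\<lambda>t. \<gamma> t $ i) s) (at s)"
    and arclength: "\<And>s. s \<in> I \<Longrightarrow> (deriv (\<lambda>t. \<gamma> t $ 1) s)^2 + (deriv (\<lambda>t. \<gamma> t $ 2) s)^2 = 1"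
  shows "biminimal_immersion heis_metric (cylinder \<gamma>) {q. q$1 \<in> I} lam
         \<longleftrightarrow> biminimal_curve \<gamma> I (lam + 1)"
proof -
  interpret cyl \<gamma> I
    by unfold_locales (use I smooth arclength in auto)
  show ?thesis by (rule final)
qed

end
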